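(* Let $\varphi:\mathbb{R}^n\to\mathbb{R}$ be of class $\mathcal{C}^{1,1}$ and let $x^0\in\mathbb{R}^n$ be such that $\partial^2\varphi(x)$ is positive-definite (i.e. $\langle z,u\rangle>0$ for all $u\ne0$, $z\in\partial^2\varphi(x)(u)$) for every $x$ in $\Omega:=\{x\mid\varphi(x)\le\varphi(x^0)\}$. Let $\{x^k\}$ be a sequence generated by the Generalized Damped Newton Algorithm (with $\sigma\in(0,\tfrac12)$, $\beta\in(0,1)$) from $x^0$, and suppose that $\{x^k\}$ converges to some $\bar x$ with $x^k\neq\bar x$ for all $k$. Then: (i) $\{\varphi(x^k)\}$ converges to $\varphi(\bar x)$ at least Q-linearly, i.e. there are $\mu\in(0,1)$ and $k_0$ with $\varphi(x^{k+1})-\varphi(\bar x)\le\mu(\varphi(x^k)-\varphi(\bar x))$ for $k\ge k_0$; (ii) $\{x^k\}$ converges to $\bar x$ and $\{\|\nabla\varphi(x^k)\|\}$ converges to $0$ at least R-linearly, i.e. there are $c>0$, $\lambda\in(0,1)$, $k_0$ with $\|x^k-\bar x\|\le c\lambda^k$ and $\|\nabla\varphi(x^k)\|\le c\lambda^k$ for all $k\ge k_0$.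
   Context: A function $\varphi:\mathbb{R}^n\to\mathbb{R}$ is of class $\mathcal{C}^{1,1}$ if it is continuously differentiable and $\nabla\varphi$ is Lipschitz continuous around every point. Regular normal cone: $\widehat N_\Omega(\bar z):=\{v\mid \limsup_{z\to\bar z,\,z\in\Omega}\langle v,z-\bar z\rangle/\|z-\bar z\|\le 0\}$; limiting normal cone $N_\Omega(\bar z)$: all $v$ with $z_k\to\bar z$, $z_k\in\Omega$, $v_k\to v$, $v_k\in\widehat N_\Omega(z_k)$. Coderivative of $F:\mathbb{R}^n\rightrightarrows\mathbb{R}^m$: $D^*F(\bar x,\bar y)(v):=\{u\mid (u,-v)\in N_{\operatorname{gph}F}(\bar x,\bar y)\}$. For $\mathcal{C}^{1,1}$ $\varphi$: $\partial^2\varphi(x)(u):=D^*(\nabla\varphi)(x,\nabla\varphi(x))(u)$. Generalized Damped Newton Algorithm: given $\sigma\in(0,\tfrac12)$, $\beta\in(0,1)$ and $x^0$, set $k=0$. If $\nabla\varphi(x^k)=0$ stop. Otherwise choose $d^k$ with $-\nabla\varphi(x^k)\in\partial^2\varphi(x^k)(d^k)$; set $\tau_k=1$ and, while $\varphi(x^k+\tau_kd^k)>\varphi(x^k)+\sigma\tau_k\langle\nabla\varphi(x^k),d^k\rangle$, replace $\tau_k$ by $\beta\tau_k$; set $x^{k+1}:=x^k+\tau_kd^k$, increase $k$ by 1 and repeat. *)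

theory Defs
  imports "HOL-Analysis.Analysis"
begin

definition grad :: "('a::euclidean_space \<Rightarrow> real) \<Rightarrow> 'a \<Rightarrow> 'a" where
  "grad \<phi> x = (SOME v. (\<phi> has_derivative (\<lambda>h. v \<bullet> h)) (at x))"

definition C11 :: "('a::euclidean_space \<Rightarrow> real) \<Rightarrow> bool" where
  "C11 \<phi> \<longleftrightarrow> (\<forall>x. \<phi> differentiable (at x)) \<and> continuous_on UNIV (grad \<phi>) \<and>
     (\<forall>x. \<exists>\<delta>>0. \<exists>L. \<forall>y\<in>ball x \<delta>. \<forall>z\<in>ball x \<delta>.
        norm (grad \<phi> y - grad \<phi> z) \<le> L * norm (y - z))"

text \<open>Regular normal cone: limsup_{z -> zb, z in Om} <v, z - zb>/|z - zb| <= 0, unfolded.\<close>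
definition regular_normal_cone :: "'a::euclidean_space set \<Rightarrow> 'a \<Rightarrow> 'a set" where
  "regular_normal_cone \<Omega> zb = {v. \<forall>\<epsilon>>0. \<exists>\<delta>>0. \<forall>z\<in>\<Omega>.
      0 < norm (z - zb) \<and> norm (z - zb) < \<delta> \<longrightarrow> v \<bullet> (z - zb) \<le> \<epsilon> * norm (z - zb)}"

definition limiting_normal_cone :: "'a::euclidean_space set \<Rightarrow> 'a \<Rightarrow> 'a set" where
  "limiting_normal_cone \<Omega> zb = {v. \<exists>zs vs. (\<forall>k. zs k \<in> \<Omega>) \<and> zs \<longlonglongrightarrow> zb \<and>
      vs \<longlonglongrightarrow> v \<and> (\<forall>k. vs k \<in> regular_normal_cone \<Omega> (zs k))}"

definition coderivative :: "('a::euclidean_space \<Rightarrow> 'b::euclidean_space set) \<Rightarrow> 'a \<Rightarrow> 'b \<Rightarrow> 'b \<Rightarrow> 'a set" where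
  "coderivative F xb yb v = {u. (u, - v) \<in> limiting_normal_cone {(x, y). y \<in> F x} (xb, yb)}"

definition gen_hessian :: "('a::euclidean_space \<Rightarrow> real) \<Rightarrow> 'a \<Rightarrow> 'a \<Rightarrow> 'a set" where
  "gen_hessian \<phi> x u = coderivative (\<lambda>y. {grad \<phi> y}) x (grad \<phi> x) u"

definition armijo :: "('a::euclidean_space \<Rightarrow> real) \<Rightarrow> real \<Rightarrow> 'a \<Rightarrow> 'a \<Rightarrow> real \<Rightarrow> bool" where
  "armijo \<phi> \<sigma> x d t \<longleftrightarrow> \<phi> (x + t *\<^sub>R d) \<le> \<phi> x + \<sigma> * t * (grad \<phi> x \<bullet> d)"

definition gdn_sequence :: "('a::euclidean_space \<Rightarrow> real) \<Rightarrow> real \<Rightarrow> real \<Rightarrow> 'a \<Rightarrow> (nat \<Rightarrow> 'a) \<Rightarrow> bool" where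
  "gdn_sequence \<phi> \<sigma> \<beta> x0 xs \<longleftrightarrow> xs 0 = x0 \<and>
    (\<forall>k. grad \<phi> (xs k) \<noteq> 0 \<and>
      (\<exists>d j. - grad \<phi> (xs k) \<in> gen_hessian \<phi> (xs k) d \<and>
         armijo \<phi> \<sigma> (xs k) d (\<beta> ^ j) \<and> (\<forall>i<j. \<not> armijo \<phi> \<sigma> (xs k) d (\<beta> ^ i)) \<and>
         xs (Suc k) = xs k + (\<beta> ^ j) *\<^sub>R d))"

end

theory Submission
  imports Defs
begin

lemma linear_inner_rep:
  fixes D :: "'a::euclidean_space \<Rightarrow> real"
  assumes "linear D"
  shows "\<exists>v. \<forall>h. D h = v \<bullet> h"
proof -
  define v where "v = (\<Sum>b\<in>Basis. D b *\<^sub>R b)"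
  have "D h = v \<bullet> h" for h
  proof -
    have "D h = D (\<Sum>b\<in>Basis. (h \<bullet> b) *\<^sub>R b)" by (simp add: euclidean_representation)
    also have "\<dots> = (\<Sum>b\<in>Basis. (h \<bullet> b) * D b)"
      using assms by (simp add: linear_sum linear_scale)
    also have "\<dots> = v \<bullet> h" unfolding v_def by (simp add: inner_sum_right inner_commute mult.commute)
    finally show ?thesis .
  qed
  then show ?thesis by blast
qed

lemma grad_deriv:
  assumes "C11 \<phi>"
  shows "(\<phi> has_derivative (\<lambda>h. grad \<phi> x \<bullet> h)) (at x)"
proof -
  from assms have "\<phi> differentiable (at x)" unfolding C11_def by blast
  then obtain D where D: "(\<phi> has_derivative D) (at x)" unfolding differentiable_def by blast
  then have "linear D" using has_derivative_linear by blast
  then obtain v where "\<forall>h. D h = v \<bullet> h" using linear_inner_rep by blast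
  then have "\<exists>v. (\<phi> has_derivative (\<lambda>h. v \<bullet> h)) (at x)"
    using D by (metis (no_types, lifting) ext)
  then show ?thesis unfolding grad_def by (rule someI_ex)
qed

lemma grad_cont:
  assumes "C11 \<phi>"
  shows "continuous_on UNIV (grad \<phi>)"
  using assms unfolding C11_def by blast

lemma phi_cont:
  assumes "C11 \<phi>"
  shows "continuous_on UNIV \<phi>"
proof -
  have "\<forall>x\<in>UNIV. isCont \<phi> x"
    using grad_deriv[OF assms] has_derivative_continuous by blast
  then show ?thesis by (simp add: continuous_at_imp_continuous_on)
qed

lemma line_deriv:
  assumes "C11 \<phi>"
  shows "((\<lambda>s. \<phi> (x + s *\<^sub>R v)) has_real_derivative (grad \<phi> (x + s *\<^sub>R v) \<bullet> v)) (at s)"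
proof -
  have l: "((\<lambda>s. x + s *\<^sub>R v) has_derivative (\<lambda>t. t *\<^sub>R v)) (at s)"
    by (auto intro!: derivative_eq_intros)
  have "((\<lambda>s. \<phi> (x + s *\<^sub>R v)) has_derivative (\<lambda>t. grad \<phi> (x + s *\<^sub>R v) \<bullet> (t *\<^sub>R v))) (at s)"
    using has_derivative_compose[OF l grad_deriv[OF assms]] by (simp add: o_def)
  then show ?thesis
    by (simp add: has_field_derivative_def mult.commute[of _ "grad \<phi> (x + s *\<^sub>R v) \<bullet> v"])
qed

lemma segment_ineq_ge:
  assumes "C11 \<phi>"
    and "\<And>s. 0 \<le> s \<Longrightarrow> s \<le> 1 \<Longrightarrow> (grad \<phi> (x + s *\<^sub>R v) - grad \<phi> x) \<bullet> v \<ge> c * s * (norm v)\<^sup>2"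
  shows "\<phi> (x + v) \<ge> \<phi> x + grad \<phi> x \<bullet> v + c / 2 * (norm v)\<^sup>2"
proof -
  define g where "g s = \<phi> (x + s *\<^sub>R v) - s * (grad \<phi> x \<bullet> v) - c / 2 * s\<^sup>2 * (norm v)\<^sup>2" for s
  have "g 0 \<le> g 1"
  proof (rule DERIV_nonneg_imp_nondecreasing[of 0 1 g])
    fix s :: real assume s: "0 \<le> s" "s \<le> 1"
    have "(g has_real_derivative (grad \<phi> (x + s *\<^sub>R v) \<bullet> v - grad \<phi> x \<bullet> v - c * s * (norm v)\<^sup>2)) (at s)"
      unfolding g_def
      by (rule derivative_eq_intros line_deriv[OF assms(1)] refl | simp)+
    moreover have "0 \<le> grad \<phi> (x + s *\<^sub>R v) \<bullet> v - grad \<phi> x \<bullet> v - c * s * (norm v)\<^sup>2"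
      using assms(2)[OF s] by (simp add: inner_diff_left)
    ultimately show "\<exists>y. (g has_real_derivative y) (at s) \<and> 0 \<le> y" by blast
  qed simp
  then show ?thesis unfolding g_def by simp
qed

lemma segment_ineq_le:
  assumes "C11 \<phi>"
    and "\<And>s. 0 \<le> s \<Longrightarrow> s \<le> 1 \<Longrightarrow> (grad \<phi> (x + s *\<^sub>R v) - grad \<phi> x) \<bullet> v \<le> c * s * (norm v)\<^sup>2"
  shows "\<phi> (x + v) \<le> \<phi> x + grad \<phi> x \<bullet> v + c / 2 * (norm v)\<^sup>2"
proof -
  define g where "g s = - \<phi> (x + s *\<^sub>R v) + s * (grad \<phi> x \<bullet> v) + c / 2 * s\<^sup>2 * (norm v)\<^sup>2" for s
  have "g 0 \<le> g 1"
  proof (rule DERIV_nonneg_imp_nondecreasing[of 0 1 g])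
    fix s :: real assume s: "0 \<le> s" "s \<le> 1"
    have "(g has_real_derivative (- (grad \<phi> (x + s *\<^sub>R v) \<bullet> v) + grad \<phi> x \<bullet> v + c * s * (norm v)\<^sup>2)) (at s)"
      unfolding g_def
      by (rule derivative_eq_intros line_deriv[OF assms(1)] refl | simp)+
    moreover have "0 \<le> - (grad \<phi> (x + s *\<^sub>R v) \<bullet> v) + grad \<phi> x \<bullet> v + c * s * (norm v)\<^sup>2"
      using assms(2)[OF s] by (simp add: inner_diff_left)
    ultimately show "\<exists>y. (g has_real_derivative y) (at s) \<and> 0 \<le> y" by blast
  qed simp
  then show ?thesis unfolding g_def by simp
qed

definition gphF :: "('a::euclidean_space \<Rightarrow> 'a) \<Rightarrow> ('a \<times> 'a) set" where
  "gphF F = {(x, y). y \<in> {F x}}"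

lemma gen_hessian_iff:
  "z \<in> gen_hessian \<phi> x u \<longleftrightarrow> (z, -u) \<in> limiting_normal_cone (gphF (grad \<phi>)) (x, grad \<phi> x)"
  unfolding gen_hessian_def coderivative_def gphF_def by simp

lemma reg_scale:
  assumes "v \<in> regular_normal_cone \<Omega> zb" "a > 0"
  shows "a *\<^sub>R v \<in> regular_normal_cone \<Omega> zb"
  unfolding regular_normal_cone_def
proof (safe)
  fix \<epsilon> :: real assume e: "\<epsilon> > 0"
  then have "\<epsilon> / a > 0" using assms by simp
  then obtain \<delta> where d: "\<delta> > 0" "\<forall>z\<in>\<Omega>. 0 < norm (z - zb) \<and> norm (z - zb) < \<delta> \<longrightarrow> v \<bullet> (z - zb) \<le> \<epsilon> / a * norm (z - zb)"
    using assms(1) unfolding regular_normal_cone_def by blast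
  show "\<exists>\<delta>>0. \<forall>z\<in>\<Omega>. 0 < norm (z - zb) \<and> norm (z - zb) < \<delta> \<longrightarrow> a *\<^sub>R v \<bullet> (z - zb) \<le> \<epsilon> * norm (z - zb)"
  proof (intro exI[of _ \<delta>] conjI ballI impI)
    fix z assume "z \<in> \<Omega>" "0 < norm (z - zb) \<and> norm (z - zb) < \<delta>"
    then have "v \<bullet> (z - zb) \<le> \<epsilon> / a * norm (z - zb)" using d by blast
    then have "a * (v \<bullet> (z - zb)) \<le> a * (\<epsilon> / a * norm (z - zb))"
      by (rule mult_left_mono) (use assms(2) in auto)
    moreover have "a * (\<epsilon> / a * norm (z - zb)) = \<epsilon> * norm (z - zb)" using assms(2) by simp
    ultimately show "a *\<^sub>R v \<bullet> (z - zb) \<le> \<epsilon> * norm (z - zb)" using assms(2) by simp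
  qed (rule d(1))
qed

lemma prox_reg:
  fixes F :: "'a::euclidean_space \<Rightarrow> 'a"
  assumes "r > 0" "M \<ge> 0"
    and prox: "\<forall>q'\<in>ball q r. u \<bullet> F q' \<ge> u \<bullet> F q + w \<bullet> (q' - q) - M * (norm (q' - q))\<^sup>2"
  shows "(w, -u) \<in> regular_normal_cone (gphF F) (q, F q)"
  unfolding regular_normal_cone_def
proof (safe)
  fix \<epsilon> :: real assume e: "\<epsilon> > 0"
  define \<delta> where "\<delta> = min r (\<epsilon> / (M + 1))"
  have dpos: "\<delta> > 0" using e assms unfolding \<delta>_def by simp
  show "\<exists>\<delta>>0. \<forall>z\<in>gphF F. 0 < norm (z - (q, F q)) \<and> norm (z - (q, F q)) < \<delta> \<longrightarrow>
        (w, -u) \<bullet> (z - (q, F q)) \<le> \<epsilon> * norm (z - (q, F q))"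
  proof (intro exI[of _ \<delta>] conjI ballI impI)
    fix z assume zG: "z \<in> gphF F" and zn: "0 < norm (z - (q, F q)) \<and> norm (z - (q, F q)) < \<delta>"
    obtain a where za: "z = (a, F a)" using zG unfolding gphF_def by auto
    have eq: "z - (q, F q) = (a - q, F a - F q)" using za by simp
    have n1: "norm (a - q) \<le> norm (z - (q, F q))" using eq norm_fst_le by metis
    then have "norm (a - q) < \<delta>" using zn by linarith
    then have "a \<in> ball q r" unfolding \<delta>_def by (simp add: dist_norm norm_minus_commute)
    then have p: "u \<bullet> F a \<ge> u \<bullet> F q + w \<bullet> (a - q) - M * (norm (a - q))\<^sup>2" using prox by blast
    have "(w, -u) \<bullet> (z - (q, F q)) = w \<bullet> (a - q) - u \<bullet> (F a - F q)"
      using eq by (simp add: inner_Pair)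
    also have "\<dots> \<le> M * (norm (a - q))\<^sup>2" using p by (simp add: inner_diff_right)
    also have "\<dots> = (M * norm (a - q)) * norm (a - q)" by (simp add: power2_eq_square)
    also have "\<dots> \<le> \<epsilon> * norm (a - q)"
    proof (rule mult_right_mono)
      have "M * norm (a - q) \<le> (M + 1) * \<delta>"
        using \<open>norm (a - q) < \<delta>\<close> assms(2) dpos
        by (smt (verit, best) mult_right_mono norm_ge_zero mult_left_mono)
      also have "\<dots> \<le> (M + 1) * (\<epsilon> / (M + 1))" unfolding \<delta>_def
        using assms(2) by (intro mult_left_mono) auto
      also have "\<dots> = \<epsilon>" using assms(2) by simp
      finally show "M * norm (a - q) \<le> \<epsilon>" .
    qed simp
    also have "\<dots> \<le> \<epsilon> * norm (z - (q, F q))" using n1 e by (simp add: mult_left_mono)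
    finally show "(w, -u) \<bullet> (z - (q, F q)) \<le> \<epsilon> * norm (z - (q, F q))" .
  qed (rule dpos)
qed

lemma reg_bound:
  fixes F :: "'a::euclidean_space \<Rightarrow> 'a"
  assumes Lip: "\<forall>y\<in>ball c \<delta>. \<forall>z\<in>ball c \<delta>. norm (F y - F z) \<le> L * norm (y - z)"
    and L: "L \<ge> 0" and q: "q \<in> ball c \<delta>"
    and N: "(w, -u) \<in> regular_normal_cone (gphF F) (q, F q)"
  shows "norm w \<le> L * norm u"
proof (cases "w = 0")
  case True then show ?thesis using L by simp
next
  case False
  then have nw: "norm w > 0" by simp
  have key: "norm w \<le> L * norm u + \<epsilon>" if e: "\<epsilon> > 0" for \<epsilon>
  proof -
    have "\<epsilon> / (1 + L) > 0" using e L by simp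
    then obtain \<delta>' where d': "\<delta>' > 0" "\<forall>z\<in>gphF F. 0 < norm (z - (q, F q)) \<and> norm (z - (q, F q)) < \<delta>'
        \<longrightarrow> (w, -u) \<bullet> (z - (q, F q)) \<le> \<epsilon> / (1 + L) * norm (z - (q, F q))"
      using N unfolding regular_normal_cone_def by blast
    define \<rho> where "\<rho> = min \<delta>' (\<delta> - dist c q)"
    have rpos: "\<rho> > 0" unfolding \<rho>_def using d' q by simp
    have lw: "(1 + L) * norm w > 0" using nw L by simp
    define t where "t = \<rho> / (2 * ((1 + L) * norm w))"
    have tpos: "t > 0" unfolding t_def using rpos lw by simp
    have tw0: "t * ((1 + L) * norm w) = \<rho> / 2" unfolding t_def using lw nw L by auto
    have tw: "t * norm w * (1 + L) = \<rho> / 2" using tw0 by (simp add: algebra_simps)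
    define a where "a = q + t *\<^sub>R w"
    have na: "norm (a - q) = t * norm w" unfolding a_def using tpos by simp
    have aball: "a \<in> ball c \<delta>"
    proof -
      have "dist c a \<le> dist c q + norm (a - q)" by (metis dist_norm dist_triangle norm_minus_commute)
      moreover have "t * norm w \<le> \<rho> / 2" using tw nw L tpos
        by (smt (verit) mult_nonneg_nonneg mult_le_cancel_left1 norm_ge_zero)
      moreover have "\<rho> \<le> \<delta> - dist c q" unfolding \<rho>_def by simp
      ultimately have "dist c a < \<delta>" using na rpos by linarith
      then show ?thesis by simp
    qed
    have FL: "norm (F a - F q) \<le> L * (t * norm w)" using Lip aball q na by metis
    define z where "z = (a, F a)"
    have zG: "z \<in> gphF F" unfolding z_def gphF_def by simp
    have eq: "z - (q, F q) = (a - q, F a - F q)" unfolding z_def by simp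
    have nz_le: "norm (z - (q, F q)) \<le> t * norm w * (1 + L)"
    proof -
      have "norm (z - (q, F q)) \<le> norm (a - q) + norm (F a - F q)" using eq norm_Pair_le by metis
      also have "\<dots> \<le> t * norm w + L * (t * norm w)" using na FL by simp
      finally show ?thesis by (simp add: algebra_simps)
    qed
    have nz_pos: "0 < norm (z - (q, F q))"
    proof -
      have "norm (a - q) \<le> norm (z - (q, F q))" using eq norm_fst_le by metis
      then show ?thesis using na tpos nw by (smt (verit) mult_pos_pos)
    qed
    have "\<rho> \<le> \<delta>'" unfolding \<rho>_def by simp
    then have "norm (z - (q, F q)) < \<delta>'" using nz_le tw rpos by linarith
    then have ineq: "(w, -u) \<bullet> (z - (q, F q)) \<le> \<epsilon> / (1 + L) * norm (z - (q, F q))"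
      using d' zG nz_pos by blast
    have lhs: "(w, -u) \<bullet> (z - (q, F q)) = t * (norm w)\<^sup>2 - u \<bullet> (F a - F q)"
      using eq unfolding a_def by (simp add: inner_Pair power2_norm_eq_inner)
    have "u \<bullet> (F a - F q) \<le> norm u * (L * (t * norm w))"
      using Cauchy_Schwarz_ineq2[of u "F a - F q"] FL
      by (smt (verit) mult_left_mono norm_ge_zero)
    moreover have "\<epsilon> / (1 + L) * norm (z - (q, F q)) \<le> \<epsilon> / (1 + L) * (t * norm w * (1 + L))"
      using nz_le e L by (intro mult_left_mono) auto
    moreover have "\<epsilon> / (1 + L) * (t * norm w * (1 + L)) = \<epsilon> * t * norm w" using L by simp
    ultimately have "t * (norm w)\<^sup>2 \<le> norm u * (L * (t * norm w)) + \<epsilon> * t * norm w"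
      using ineq lhs by linarith
    then have "(t * norm w) * norm w \<le> (t * norm w) * (L * norm u + \<epsilon>)"
      by (simp add: power2_eq_square algebra_simps)
    then show ?thesis using tpos nw by (simp add: mult_le_cancel_left_pos)
  qed
  show ?thesis
  proof (rule field_le_epsilon)
    fix e :: real assume "e > 0" then show "norm w \<le> L * norm u + e" using key by blast
  qed
qed

lemma lim_est:
  fixes \<phi> :: "'a::euclidean_space \<Rightarrow> real"
  assumes reg: "\<forall>q\<in>ball xb \<delta>1. \<forall>u w. (w, -u) \<in> regular_normal_cone (gphF (grad \<phi>)) (q, grad \<phi> q)
      \<longrightarrow> w \<bullet> u \<ge> \<kappa> * (norm u)\<^sup>2 \<and> norm w \<le> L * norm u"
    and x: "x \<in> ball xb \<delta>1" and z: "z \<in> gen_hessian \<phi> x u"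
  shows "z \<bullet> u \<ge> \<kappa> * (norm u)\<^sup>2 \<and> norm z \<le> L * norm u"
proof -
  obtain zs vs where zs: "\<forall>k. zs k \<in> gphF (grad \<phi>)" "zs \<longlonglongrightarrow> (x, grad \<phi> x)" "vs \<longlonglongrightarrow> (z, -u)"
    "\<forall>k. vs k \<in> regular_normal_cone (gphF (grad \<phi>)) (zs k)"
    using z unfolding gen_hessian_iff limiting_normal_cone_def by blast
  have f1: "(\<lambda>k. fst (zs k)) \<longlonglongrightarrow> x" using tendsto_fst[OF zs(2)] by simp
  have ev: "eventually (\<lambda>k. fst (zs k) \<in> ball xb \<delta>1) sequentially"
    using f1 x open_ball unfolding tendsto_def by blast
  have ev2: "eventually (\<lambda>k. fst (vs k) \<bullet> (- snd (vs k)) \<ge> \<kappa> * (norm (- snd (vs k)))\<^sup>2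
       \<and> norm (fst (vs k)) \<le> L * norm (- snd (vs k))) sequentially"
  proof (rule eventually_mono[OF ev])
    fix k assume k: "fst (zs k) \<in> ball xb \<delta>1"
    have "zs k \<in> gphF (grad \<phi>)" using zs(1) by blast
    then have zk: "zs k = (fst (zs k), grad \<phi> (fst (zs k)))" unfolding gphF_def
      by (cases "zs k") auto
    have vk: "vs k = (fst (vs k), - (- snd (vs k)))" by simp
    have "(fst (vs k), - (- snd (vs k))) \<in> regular_normal_cone (gphF (grad \<phi>)) (fst (zs k), grad \<phi> (fst (zs k)))"
      using zs(4) zk vk by metis
    then show "fst (vs k) \<bullet> (- snd (vs k)) \<ge> \<kappa> * (norm (- snd (vs k)))\<^sup>2
       \<and> norm (fst (vs k)) \<le> L * norm (- snd (vs k))"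
      using reg k by blast
  qed
  have v1: "(\<lambda>k. fst (vs k)) \<longlonglongrightarrow> z" using tendsto_fst[OF zs(3)] by simp
  have v2: "(\<lambda>k. - snd (vs k)) \<longlonglongrightarrow> u" using tendsto_minus[OF tendsto_snd[OF zs(3)]] by simp
  have l1: "(\<lambda>k. fst (vs k) \<bullet> (- snd (vs k))) \<longlonglongrightarrow> z \<bullet> u" by (intro tendsto_intros v1 v2)
  have l2: "(\<lambda>k. \<kappa> * (norm (- snd (vs k)))\<^sup>2) \<longlonglongrightarrow> \<kappa> * (norm u)\<^sup>2" by (intro tendsto_intros v2)
  have l3: "(\<lambda>k. norm (fst (vs k))) \<longlonglongrightarrow> norm z" by (intro tendsto_intros v1)
  have l4: "(\<lambda>k. L * norm (- snd (vs k))) \<longlonglongrightarrow> L * norm u" by (intro tendsto_intros v2)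
  have "z \<bullet> u \<ge> \<kappa> * (norm u)\<^sup>2"
    by (rule tendsto_le[OF _ l1 l2]) (use ev2 in \<open>auto elim: eventually_mono\<close>)
  moreover have "norm z \<le> L * norm u"
    by (rule tendsto_le[OF _ l4 l3]) (use ev2 in \<open>auto elim: eventually_mono\<close>)
  ultimately show ?thesis by blast
qed

lemma unif_pos:
  fixes \<phi> :: "'a::euclidean_space \<Rightarrow> real"
  assumes C: "C11 \<phi>"
    and Lip: "\<forall>y\<in>ball xb \<delta>0. \<forall>z\<in>ball xb \<delta>0. norm (grad \<phi> y - grad \<phi> z) \<le> L * norm (y - z)"
    and L: "L \<ge> 0" and d0: "\<delta>0 > 0"
    and pd: "\<forall>u z. u \<noteq> 0 \<and> z \<in> gen_hessian \<phi> xb u \<longrightarrow> z \<bullet> u > 0"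
  shows "\<exists>\<delta>1 \<kappa>. 0 < \<delta>1 \<and> \<delta>1 \<le> \<delta>0 \<and> 0 < \<kappa> \<and>
     (\<forall>q\<in>ball xb \<delta>1. \<forall>u w. (w, -u) \<in> regular_normal_cone (gphF (grad \<phi>)) (q, grad \<phi> q)
        \<longrightarrow> w \<bullet> u \<ge> \<kappa> * (norm u)\<^sup>2)"
proof (rule ccontr)
  let ?N = "\<lambda>q. regular_normal_cone (gphF (grad \<phi>)) (q, grad \<phi> q)"
  assume neg: "\<not> ?thesis"
  have "\<forall>n::nat. \<exists>q u w. q \<in> ball xb (min \<delta>0 (1 / Suc n)) \<and> (w, -u) \<in> ?N q \<and> w \<bullet> u < 1 / Suc n * (norm u)\<^sup>2"
  proof
    fix n :: nat
    have "0 < min \<delta>0 (1 / Suc n)" "min \<delta>0 (1 / Suc n) \<le> \<delta>0" "0 < 1 / real (Suc n)" using d0 by auto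
    then show "\<exists>q u w. q \<in> ball xb (min \<delta>0 (1 / Suc n)) \<and> (w, -u) \<in> ?N q \<and> w \<bullet> u < 1 / Suc n * (norm u)\<^sup>2"
      using neg by (meson not_le)
  qed
  then obtain Q U W where QUW: "\<And>n. Q n \<in> ball xb (min \<delta>0 (1 / Suc n))"
    "\<And>n. (W n, - U n) \<in> ?N (Q n)" "\<And>n. W n \<bullet> U n < 1 / Suc n * (norm (U n))\<^sup>2"
    by metis
  have Qb: "Q n \<in> ball xb \<delta>0" for n using QUW(1)[of n] by simp
  have Wb: "norm (W n) \<le> L * norm (U n)" for n
    using reg_bound[OF Lip L Qb QUW(2)] .
  have Unz: "U n \<noteq> 0" for n
  proof
    assume "U n = 0"
    then have "W n = 0" using Wb[of n] by simp
    then show False using QUW(3)[of n] \<open>U n = 0\<close> by simp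
  qed
  define u' where "u' n = (1 / norm (U n)) *\<^sub>R U n" for n
  define w' where "w' n = (1 / norm (U n)) *\<^sub>R W n" for n
  have nu': "norm (u' n) = 1" for n unfolding u'_def using Unz[of n] by simp
  have N': "(w' n, - u' n) \<in> ?N (Q n)" for n
  proof -
    have "(1 / norm (U n)) *\<^sub>R (W n, - U n) \<in> ?N (Q n)"
      by (rule reg_scale[OF QUW(2)]) (use Unz[of n] in simp)
    then show ?thesis unfolding u'_def w'_def by simp
  qed
  have wb': "norm (w' n) \<le> L" for n
    using Wb[of n] Unz[of n] unfolding w'_def by (simp add: field_simps)
  have wu': "w' n \<bullet> u' n < 1 / Suc n" for n
  proof -
    have "w' n \<bullet> u' n = (W n \<bullet> U n) / (norm (U n))\<^sup>2"
      unfolding u'_def w'_def by (simp add: power2_eq_square)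
    moreover have "(norm (U n))\<^sup>2 > 0" using Unz[of n] by simp
    ultimately show ?thesis using QUW(3)[of n] by (simp add: divide_less_eq)
  qed
  define f where "f n = (w' n, u' n)" for n
  have fK: "f n \<in> cball 0 L \<times> sphere 0 1" for n unfolding f_def using wb' nu' by simp
  have "seq_compact (cball (0::'a) L \<times> sphere (0::'a) 1)"
    by (intro compact_imp_seq_compact compact_Times compact_cball compact_sphere)
  then obtain l r where lr: "l \<in> cball 0 L \<times> sphere 0 1" "strict_mono r" "(f \<circ> r) \<longlonglongrightarrow> l"
    using fK by (metis seq_compactE)
  obtain w u where l: "l = (w, u)" by (cases l)
  have nu: "norm u = 1" using lr(1) l by simp
  have fw: "(\<lambda>k. w' (r k)) \<longlonglongrightarrow> w" using tendsto_fst[OF lr(3)] l by (simp add: f_def o_def)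
  have fu: "(\<lambda>k. u' (r k)) \<longlonglongrightarrow> u" using tendsto_snd[OF lr(3)] l by (simp add: f_def o_def)
  have Qlim: "Q \<longlonglongrightarrow> xb"
  proof -
    have "(\<lambda>n. dist (Q n) xb) \<longlonglongrightarrow> 0"
    proof (rule real_tendsto_sandwich[of "\<lambda>n. 0" _ _ "\<lambda>n. 1 / Suc n"])
      show "\<forall>\<^sub>F n in sequentially. 0 \<le> dist (Q n) xb" by simp
      show "\<forall>\<^sub>F n in sequentially. dist (Q n) xb \<le> 1 / real (Suc n)"
        using QUW(1) by (simp add: dist_commute less_imp_le)
      show "(\<lambda>n. 0) \<longlonglongrightarrow> (0::real)" by simp
      show "(\<lambda>n. 1 / real (Suc n)) \<longlonglongrightarrow> 0" by (rule LIMSEQ_Suc[OF lim_const_over_n])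
    qed
    then show ?thesis using tendsto_dist_iff by blast
  qed
  have Qr: "(\<lambda>k. Q (r k)) \<longlonglongrightarrow> xb" using LIMSEQ_subseq_LIMSEQ[OF Qlim lr(2)] by (simp add: o_def)
  have Gr: "(\<lambda>k. grad \<phi> (Q (r k))) \<longlonglongrightarrow> grad \<phi> xb"
    using continuous_on_tendsto_compose[OF grad_cont[OF C] Qr] by simp
  have "(w, -u) \<in> limiting_normal_cone (gphF (grad \<phi>)) (xb, grad \<phi> xb)"
    unfolding limiting_normal_cone_def
  proof (intro CollectI exI conjI allI)
    show "(\<lambda>k. (Q (r k), grad \<phi> (Q (r k)))) \<longlonglongrightarrow> (xb, grad \<phi> xb)" by (intro tendsto_Pair Qr Gr)
    show "(\<lambda>k. (w' (r k), - u' (r k))) \<longlonglongrightarrow> (w, -u)" by (intro tendsto_Pair tendsto_minus fw fu)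
    fix k
    show "(Q (r k), grad \<phi> (Q (r k))) \<in> gphF (grad \<phi>)" unfolding gphF_def by simp
    show "(w' (r k), - u' (r k)) \<in> regular_normal_cone (gphF (grad \<phi>)) (Q (r k), grad \<phi> (Q (r k)))"
      using N' by simp
  qed
  then have "w \<in> gen_hessian \<phi> xb u" unfolding gen_hessian_iff .
  moreover have "u \<noteq> 0" using nu by auto
  ultimately have pos: "w \<bullet> u > 0" using pd by blast
  have lim1: "(\<lambda>k. w' (r k) \<bullet> u' (r k)) \<longlonglongrightarrow> w \<bullet> u" by (intro tendsto_intros fw fu)
  have lim2: "(\<lambda>k. 1 / real (Suc k)) \<longlonglongrightarrow> 0" by (rule LIMSEQ_Suc[OF lim_const_over_n])
  have "w \<bullet> u \<le> 0"
  proof (rule tendsto_le[OF _ lim2 lim1])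
    show "\<forall>\<^sub>F k in sequentially. w' (r k) \<bullet> u' (r k) \<le> 1 / real (Suc k)"
    proof (rule always_eventually, rule allI)
      fix k
      have "k \<le> r k" using seq_suble[OF lr(2)] by blast
      then have "1 / real (Suc (r k)) \<le> 1 / real (Suc k)" by (simp add: frac_le)
      then show "w' (r k) \<bullet> u' (r k) \<le> 1 / real (Suc k)" using wu'[of "r k"] by linarith
    qed
  qed simp
  then show False using pos by simp
qed

lemma norm_add_sq:
  fixes a b :: "'a::real_inner"
  shows "(norm (a + b))\<^sup>2 = (norm a)\<^sup>2 + 2 * (a \<bullet> b) + (norm b)\<^sup>2"
  by (simp add: power2_norm_eq_inner inner_add_left inner_add_right inner_commute)

lemma chain_mono:
  fixes h :: "'a::euclidean_space \<Rightarrow> real"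
  assumes Lh: "\<forall>a\<in>ball c \<rho>. \<forall>b\<in>ball c \<rho>. \<bar>h a - h b\<bar> \<le> Lh * norm (a - b)" and Lh0: "Lh \<ge> 0"
    and R: "R > 0" and rr: "\<rho>i + R < \<rho>"
    and x: "x \<in> ball c \<rho>i" and xu: "x + u \<in> ball c \<rho>i"
    and H: "\<forall>q\<in>ball c \<rho>. \<forall>w M r. r > 0 \<and> M \<ge> 0 \<and>
              (\<forall>q'\<in>ball q r. h q' \<ge> h q + w \<bullet> (q' - q) - M * (norm (q' - q))\<^sup>2) \<longrightarrow> w \<bullet> u \<ge> \<kappa> * (norm u)\<^sup>2"
  shows "h (x + u) - h x \<ge> \<kappa> * (norm u)\<^sup>2"
proof -
  have cont: "continuous_on (ball c \<rho>) h"
  proof (rule lipschitz_on_continuous_on)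
    show "Lh-lipschitz_on (ball c \<rho>) h"
      by (rule lipschitz_onI) (use Lh Lh0 in \<open>auto simp: dist_norm dist_real_def\<close>)
  qed
  have sub: "cball p R \<subseteq> ball c \<rho>" if "p \<in> ball c \<rho>i" for p
  proof
    fix q assume "q \<in> cball p R"
    then have "dist c q \<le> dist c p + R" using dist_triangle[of c q p] by simp
    then show "q \<in> ball c \<rho>" using that rr by simp
  qed
  have main: "h (x + u) - h x \<ge> \<kappa> * (norm u)\<^sup>2 - \<epsilon>" if e: "\<epsilon> > 0" for \<epsilon>
  proof -
    define M where "M = max (2 * Lh / R) (Lh\<^sup>2 / (2 * \<epsilon>)) + 1"
    have "0 \<le> 2 * Lh / R" using Lh0 R by simp
    then have "0 \<le> max (2 * Lh / R) (Lh\<^sup>2 / (2 * \<epsilon>))" by (simp add: le_max_iff_disj)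
    then have Mpos: "M > 0" unfolding M_def by linarith
    have M1: "Lh \<le> M * (R / 2)"
    proof -
      have "2 * Lh / R \<le> M" unfolding M_def by simp
      then have "2 * Lh \<le> M * R" using R by (simp add: divide_le_eq)
      then show ?thesis by simp
    qed
    have M2: "Lh\<^sup>2 / (4 * M) \<le> \<epsilon> / 2"
    proof -
      have "Lh\<^sup>2 / (2 * \<epsilon>) \<le> M" unfolding M_def by simp
      then have "Lh\<^sup>2 \<le> M * (2 * \<epsilon>)" using e by (simp add: divide_le_eq)
      then show ?thesis using Mpos by (simp add: divide_le_eq field_simps)
    qed
    obtain N :: nat where N: "N > 2 * M * (norm u)\<^sup>2 / \<epsilon> + 2 * norm u / R + 1"
      using reals_Archimedean2 by blast
    have nn1: "0 \<le> 2 * M * (norm u)\<^sup>2 / \<epsilon>" using Mpos e by simp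
    have nn2: "0 \<le> 2 * norm u / R" using R by simp
    have Npos: "real N > 0" using N nn1 nn2 by linarith
    have N1: "M * (norm u)\<^sup>2 / N \<le> \<epsilon> / 2"
    proof -
      have "2 * M * (norm u)\<^sup>2 / \<epsilon> \<le> N" using N nn2 by linarith
      then have "2 * M * (norm u)\<^sup>2 \<le> N * \<epsilon>" using e by (simp add: divide_le_eq)
      then show ?thesis using Npos by (simp add: divide_le_eq field_simps)
    qed
    have N2: "norm u / N \<le> R / 2"
    proof -
      have "2 * norm u / R \<le> N" using N nn1 by linarith
      then have "2 * norm u \<le> N * R" using R by (simp add: divide_le_eq)
      then show ?thesis using Npos by (simp add: divide_le_eq field_simps)
    qed
    have "\<forall>p. \<exists>q. p \<in> ball c \<rho>i \<longrightarrow> q \<in> cball p R \<and>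
        (\<forall>q'\<in>cball p R. h q + M * (norm (q - p))\<^sup>2 \<le> h q' + M * (norm (q' - p))\<^sup>2)"
    proof
      fix p
      show "\<exists>q. p \<in> ball c \<rho>i \<longrightarrow> q \<in> cball p R \<and>
        (\<forall>q'\<in>cball p R. h q + M * (norm (q - p))\<^sup>2 \<le> h q' + M * (norm (q' - p))\<^sup>2)"
      proof (cases "p \<in> ball c \<rho>i")
        case True
        have "continuous_on (cball p R) (\<lambda>q. h q + M * (norm (q - p))\<^sup>2)"
          by (intro continuous_intros continuous_on_subset[OF cont sub[OF True]])
        then obtain q where "q \<in> cball p R" "\<forall>q'\<in>cball p R. h q + M * (norm (q - p))\<^sup>2 \<le> h q' + M * (norm (q' - p))\<^sup>2"
          using continuous_attains_inf[of "cball p R"] R by fastforce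
        then show ?thesis by blast
      qed blast
    qed
    then obtain qf where qf: "\<And>p. p \<in> ball c \<rho>i \<Longrightarrow> qf p \<in> cball p R"
      "\<And>p q'. p \<in> ball c \<rho>i \<Longrightarrow> q' \<in> cball p R \<Longrightarrow> h (qf p) + M * (norm (qf p - p))\<^sup>2 \<le> h q' + M * (norm (q' - p))\<^sup>2"
      by metis
    define E where "E p = h (qf p) + M * (norm (qf p - p))\<^sup>2" for p
    have hl: "h p - h (qf p) \<le> Lh * norm (qf p - p)" if p: "p \<in> ball c \<rho>i" for p
    proof -
      have pin: "p \<in> cball p R" using R by simp
      have a: "p \<in> ball c \<rho>" using sub[OF p] pin by blast
      have b: "qf p \<in> ball c \<rho>" using sub[OF p] qf(1)[OF p] by blast
      have "\<bar>h p - h (qf p)\<bar> \<le> Lh * norm (p - qf p)" using Lh a b by blast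
      then show ?thesis by (simp add: norm_minus_commute)
    qed
    have qclose: "norm (qf p - p) \<le> R / 2" if p: "p \<in> ball c \<rho>i" for p
    proof -
      have pin: "p \<in> cball p R" using R by simp
      have "h (qf p) + M * (norm (qf p - p))\<^sup>2 \<le> h p" using qf(2)[OF p pin] by simp
      moreover have "h p - h (qf p) \<le> Lh * norm (qf p - p)" using hl[OF p] by simp
      ultimately have "M * (norm (qf p - p))\<^sup>2 \<le> Lh * norm (qf p - p)" by linarith
      then have "(M * norm (qf p - p)) * norm (qf p - p) \<le> Lh * norm (qf p - p)"
        by (simp add: power2_eq_square mult.assoc)
      then have "M * norm (qf p - p) \<le> Lh \<or> norm (qf p - p) = 0"
        by (metis mult_right_le_imp_le norm_ge_zero order_le_less)
      then have "M * norm (qf p - p) \<le> M * (R / 2)" using M1 R Mpos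
        by (elim disjE) (linarith, simp)
      then show ?thesis using Mpos by simp
    qed
    have Elow: "E p \<ge> h p - Lh\<^sup>2 / (4 * M)" if p: "p \<in> ball c \<rho>i" for p
    proof -
      let ?t = "norm (qf p - p)"
      have pin: "p \<in> cball p R" using R by simp
      have "h p - h (qf p) \<le> Lh * ?t" using hl[OF p] by simp
      moreover have "M * ?t\<^sup>2 - Lh * ?t \<ge> - Lh\<^sup>2 / (4 * M)"
      proof -
        have "0 \<le> (2 * M * ?t - Lh)\<^sup>2" by simp
        then have "0 \<le> 4 * M * (M * ?t\<^sup>2 - Lh * ?t) + Lh\<^sup>2" by (simp add: power2_eq_square algebra_simps)
        then have "- Lh\<^sup>2 \<le> (4 * M) * (M * ?t\<^sup>2 - Lh * ?t)" by linarith
        then have "(- Lh\<^sup>2) / (4 * M) \<le> ((4 * M) * (M * ?t\<^sup>2 - Lh * ?t)) / (4 * M)"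
          using Mpos by (intro divide_right_mono) auto
        then show ?thesis using Mpos by simp
      qed
      ultimately show ?thesis unfolding E_def by linarith
    qed
    have Eup: "E p \<le> h p" if p: "p \<in> ball c \<rho>i" for p
      using qf(2)[OF p, of p] R unfolding E_def by simp
    have step: "E (p - s *\<^sub>R u) \<le> E p - s * (\<kappa> * (norm u)\<^sup>2) + M * s\<^sup>2 * (norm u)\<^sup>2"
      if p: "p \<in> ball c \<rho>i" and p': "p - s *\<^sub>R u \<in> ball c \<rho>i" and s: "s \<ge> 0" "s * norm u \<le> R / 2" for p s
    proof -
      let ?q = "qf p"
      define w where "w = (2 * M) *\<^sub>R (p - ?q)"
      have qball: "?q \<in> ball c \<rho>" using sub[OF p] qf(1)[OF p] by blast
      have prox: "\<forall>q'\<in>ball ?q (R/2). h q' \<ge> h ?q + w \<bullet> (q' - ?q) - M * (norm (q' - ?q))\<^sup>2"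
      proof
        fix q' assume q': "q' \<in> ball ?q (R/2)"
        have "norm (q' - p) \<le> norm (q' - ?q) + norm (?q - p)" using norm_triangle_ineq[of "q' - ?q" "?q - p"] by simp
        moreover have "norm (q' - ?q) < R / 2" using q' by (simp add: dist_norm norm_minus_commute)
        ultimately have "norm (q' - p) \<le> R" using qclose[OF p] by linarith
        then have "q' \<in> cball p R" by (simp add: dist_norm norm_minus_commute)
        then have ineq: "h ?q + M * (norm (?q - p))\<^sup>2 \<le> h q' + M * (norm (q' - p))\<^sup>2" using qf(2)[OF p] by blast
        have id: "(norm (q' - p))\<^sup>2 = (norm (q' - ?q))\<^sup>2 + 2 * ((q' - ?q) \<bullet> (?q - p)) + (norm (?q - p))\<^sup>2"
          using norm_add_sq[of "q' - ?q" "?q - p"] by simp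
        have "w \<bullet> (q' - ?q) = - 2 * M * ((q' - ?q) \<bullet> (?q - p))"
          unfolding w_def by (simp add: inner_commute inner_diff_left inner_diff_right algebra_simps)
        then show "h q' \<ge> h ?q + w \<bullet> (q' - ?q) - M * (norm (q' - ?q))\<^sup>2"
          using ineq id by (simp add: algebra_simps)
      qed
      have "R / 2 > 0 \<and> M \<ge> 0 \<and> (\<forall>q'\<in>ball ?q (R/2). h q' \<ge> h ?q + w \<bullet> (q' - ?q) - M * (norm (q' - ?q))\<^sup>2)"
        using prox R Mpos by simp
      then have wu: "w \<bullet> u \<ge> \<kappa> * (norm u)\<^sup>2"
        using H qball by blast
      have "norm (?q - (p - s *\<^sub>R u)) \<le> norm (?q - p) + norm (s *\<^sub>R u)"
        using norm_triangle_ineq[of "?q - p" "s *\<^sub>R u"] by (simp add: algebra_simps)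
      then have "norm (?q - (p - s *\<^sub>R u)) \<le> R" using qclose[OF p] s by simp
      then have qin: "?q \<in> cball (p - s *\<^sub>R u) R" by (simp add: dist_norm norm_minus_commute)
      have "E (p - s *\<^sub>R u) \<le> h ?q + M * (norm (?q - (p - s *\<^sub>R u)))\<^sup>2"
        unfolding E_def using qf(2)[OF p' qin] .
      also have "(norm (?q - (p - s *\<^sub>R u)))\<^sup>2 = (norm (?q - p))\<^sup>2 + 2 * s * ((?q - p) \<bullet> u) + s\<^sup>2 * (norm u)\<^sup>2"
      proof -
        have "?q - (p - s *\<^sub>R u) = (?q - p) + s *\<^sub>R u" by simp
        then have "(norm (?q - (p - s *\<^sub>R u)))\<^sup>2 = (norm ((?q - p) + s *\<^sub>R u))\<^sup>2" by metis
        also have "\<dots> = (norm (?q - p))\<^sup>2 + 2 * ((?q - p) \<bullet> (s *\<^sub>R u)) + (norm (s *\<^sub>R u))\<^sup>2"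
          by (rule norm_add_sq)
        also have "\<dots> = (norm (?q - p))\<^sup>2 + 2 * s * ((?q - p) \<bullet> u) + s\<^sup>2 * (norm u)\<^sup>2"
          by (simp add: power_mult_distrib)
        finally show ?thesis .
      qed
      finally have "E (p - s *\<^sub>R u) \<le> E p + 2 * M * s * ((?q - p) \<bullet> u) + M * s\<^sup>2 * (norm u)\<^sup>2"
        unfolding E_def by (simp add: algebra_simps)
      moreover have "2 * M * s * ((?q - p) \<bullet> u) = - s * (w \<bullet> u)"
        unfolding w_def by (simp add: inner_diff_left algebra_simps)
      moreover have "s * (\<kappa> * (norm u)\<^sup>2) \<le> s * (w \<bullet> u)" using wu s by (simp add: mult_left_mono)
      ultimately show ?thesis by linarith
    qed
    define P where "P j = x + (real j / N) *\<^sub>R u" for j :: nat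
    have Pin: "P j \<in> ball c \<rho>i" if "j \<le> N" for j
    proof -
      have "P j = (1 - real j / N) *\<^sub>R x + (real j / N) *\<^sub>R (x + u)" unfolding P_def
        by (simp add: algebra_simps)
      moreover have "0 \<le> real j / N" "real j / N \<le> 1" using that Npos by auto
      ultimately show ?thesis using convexD[OF convex_ball x xu, of "1 - real j / N" "real j / N"] by simp
    qed
    define K where "K = \<kappa> * (norm u)\<^sup>2"
    define Q where "Q = M * (norm u)\<^sup>2 / (real N)\<^sup>2"
    have chain: "E (P 0) \<le> E (P j) - (real j / N) * K + real j * Q"
      if "j \<le> N" for j
      using that
    proof (induction j)
      case 0 then show ?case by simp
    next
      case (Suc j)
      have jN: "j \<le> N" using Suc.prems by simp
      have a: "P j \<in> ball c \<rho>i" using Pin[OF jN] .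
      have b: "P (Suc j) \<in> ball c \<rho>i" using Pin[OF Suc.prems] .
      have "P (Suc j) = P j + (1 / N) *\<^sub>R u" unfolding P_def
        by (simp add: add_divide_distrib scaleR_add_left)
      then have pj: "P j = P (Suc j) - (1 / N) *\<^sub>R u" by simp
      have sN: "(1 / N) * norm u \<le> R / 2" using N2 by simp
      have a': "P (Suc j) - (1 / N) *\<^sub>R u \<in> ball c \<rho>i" using a pj by simp
      have st: "E (P (Suc j) - (1 / N) *\<^sub>R u) \<le> E (P (Suc j)) - (1 / N) * (\<kappa> * (norm u)\<^sup>2) + M * (1 / N)\<^sup>2 * (norm u)\<^sup>2"
        by (rule step[OF b a']) (use sN Npos in auto)
      have e1: "E (P j) = E (P (Suc j) - (1 / N) *\<^sub>R u)" using pj by simp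
      have e2: "M * (1 / N)\<^sup>2 * (norm u)\<^sup>2 = Q" unfolding Q_def by (simp add: power_one_over)
      have st': "E (P j) \<le> E (P (Suc j)) - (1 / N) * K + Q" using st e1 e2 unfolding K_def by simp
      have e3: "(real (Suc j) / N) * K = (real j / N) * K + (1 / N) * K"
        by (simp add: add_divide_distrib distrib_right)
      have e4: "real (Suc j) * Q = real j * Q + Q" by (simp add: distrib_right)
      have IH: "E (P 0) \<le> E (P j) - (real j / N) * K + real j * Q" using Suc.IH[OF jN] .
      show ?case using IH st' e3 e4 by linarith
    qed
    have P0: "P 0 = x" and PN: "P N = x + u" unfolding P_def using Npos by auto
    have "E x \<le> E (x + u) - \<kappa> * (norm u)\<^sup>2 + M * (norm u)\<^sup>2 / N"
    proof -
      have "real N * (M * (norm u)\<^sup>2 / (real N)\<^sup>2) = M * (norm u)\<^sup>2 / N"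
        using Npos by (simp add: power2_eq_square)
      moreover have "E (P 0) \<le> E (P N) - (real N / N) * K + real N * Q" using chain[of N] by simp
      ultimately show ?thesis using P0 PN Npos unfolding K_def Q_def by simp
    qed
    then show ?thesis using Elow[OF x] Eup[OF xu] N1 M2 by linarith
  qed
  have "\<kappa> * (norm u)\<^sup>2 \<le> (h (x + u) - h x) + \<epsilon>" if "\<epsilon> > 0" for \<epsilon>
    using main[OF that] by linarith
  then show ?thesis by (rule field_le_epsilon) simp
qed

lemma strong_mono:
  fixes \<phi> :: "'a::euclidean_space \<Rightarrow> real"
  assumes Lip: "\<forall>y\<in>ball xb \<delta>1. \<forall>z\<in>ball xb \<delta>1. norm (grad \<phi> y - grad \<phi> z) \<le> L * norm (y - z)"
    and L: "L \<ge> 0" and d1: "\<delta>1 > 0"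
    and reg: "\<forall>q\<in>ball xb \<delta>1. \<forall>u w. (w, -u) \<in> regular_normal_cone (gphF (grad \<phi>)) (q, grad \<phi> q)
        \<longrightarrow> w \<bullet> u \<ge> \<kappa> * (norm u)\<^sup>2"
    and x: "x \<in> ball xb (\<delta>1 / 2)" and y: "y \<in> ball xb (\<delta>1 / 2)"
  shows "(y - x) \<bullet> (grad \<phi> y - grad \<phi> x) \<ge> \<kappa> * (norm (y - x))\<^sup>2"
proof -
  let ?u = "y - x"
  let ?h = "\<lambda>a. ?u \<bullet> grad \<phi> a"
  have "?h (x + ?u) - ?h x \<ge> \<kappa> * (norm ?u)\<^sup>2"
  proof (rule chain_mono[where c = xb and \<rho> = \<delta>1 and Lh = "norm ?u * L" and R = "\<delta>1 / 4" and \<rho>i = "\<delta>1 / 2"])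
    show "\<forall>a\<in>ball xb \<delta>1. \<forall>b\<in>ball xb \<delta>1. \<bar>?h a - ?h b\<bar> \<le> norm ?u * L * norm (a - b)"
    proof (intro ballI)
      fix a b assume a: "a \<in> ball xb \<delta>1" and b: "b \<in> ball xb \<delta>1"
      have "\<bar>?h a - ?h b\<bar> = \<bar>?u \<bullet> (grad \<phi> a - grad \<phi> b)\<bar>" by (simp add: inner_diff_right)
      also have "\<dots> \<le> norm ?u * norm (grad \<phi> a - grad \<phi> b)" by (rule Cauchy_Schwarz_ineq2)
      also have "\<dots> \<le> norm ?u * (L * norm (a - b))" using Lip a b by (simp add: mult_left_mono)
      finally show "\<bar>?h a - ?h b\<bar> \<le> norm ?u * L * norm (a - b)" by (simp add: mult.assoc)
    qed
    show "0 \<le> norm ?u * L" using L by simp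
    show "0 < \<delta>1 / 4" using d1 by simp
    show "\<delta>1 / 2 + \<delta>1 / 4 < \<delta>1" using d1 by simp
    show "x \<in> ball xb (\<delta>1 / 2)" by (rule x)
    show "x + ?u \<in> ball xb (\<delta>1 / 2)" using y by simp
    show "\<forall>q\<in>ball xb \<delta>1. \<forall>w M r. r > 0 \<and> M \<ge> 0 \<and>
              (\<forall>q'\<in>ball q r. ?h q' \<ge> ?h q + w \<bullet> (q' - q) - M * (norm (q' - q))\<^sup>2) \<longrightarrow> w \<bullet> ?u \<ge> \<kappa> * (norm ?u)\<^sup>2"
    proof (intro ballI allI impI)
      fix q w M r assume q: "q \<in> ball xb \<delta>1" and H: "r > 0 \<and> M \<ge> 0 \<and>
              (\<forall>q'\<in>ball q r. ?h q' \<ge> ?h q + w \<bullet> (q' - q) - M * (norm (q' - q))\<^sup>2)"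
      have "(w, - ?u) \<in> regular_normal_cone (gphF (grad \<phi>)) (q, grad \<phi> q)"
        using prox_reg[of r M q ?u "grad \<phi>" w] H by blast
      then show "w \<bullet> ?u \<ge> \<kappa> * (norm ?u)\<^sup>2" using reg q by blast
    qed
  qed
  then show ?thesis by (simp add: inner_diff_right)
qed

theorem theorem4p2:
  fixes \<phi> :: "'a::euclidean_space \<Rightarrow> real" and x0 xb :: 'a and xs :: "nat \<Rightarrow> 'a"
    and \<sigma> \<beta> :: real
  assumes "C11 \<phi>"
    and "\<forall>x. \<phi> x \<le> \<phi> x0 \<longrightarrow> (\<forall>u z. u \<noteq> 0 \<and> z \<in> gen_hessian \<phi> x u \<longrightarrow> z \<bullet> u > 0)"
    and "0 < \<sigma>" "\<sigma> < 1/2" "0 < \<beta>" "\<beta> < 1"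
    and "gdn_sequence \<phi> \<sigma> \<beta> x0 xs"
    and "xs \<longlonglongrightarrow> xb"
    and "\<forall>k. xs k \<noteq> xb"
  shows "(\<exists>\<mu> k0. 0 < \<mu> \<and> \<mu> < 1 \<and>
            (\<forall>k\<ge>k0. \<phi> (xs (Suc k)) - \<phi> xb \<le> \<mu> * (\<phi> (xs k) - \<phi> xb)))
       \<and> (\<exists>c r k0. 0 < c \<and> 0 < r \<and> r < 1 \<and>
            (\<forall>k\<ge>k0. norm (xs k - xb) \<le> c * r ^ k \<and> norm (grad \<phi> (xs k)) \<le> c * r ^ k))"
proof -
  note C = assms(1) and pd = assms(2) and sg = assms(3,4) and bt = assms(5,6)
  note lim = assms(8)
  let ?F = "grad \<phi>"
  have x0: "xs 0 = x0" and gnz: "\<And>k. ?F (xs k) \<noteq> 0"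
    using assms(7) unfolding gdn_sequence_def by auto
  have "\<forall>k. \<exists>d j. - ?F (xs k) \<in> gen_hessian \<phi> (xs k) d \<and>
         armijo \<phi> \<sigma> (xs k) d (\<beta> ^ j) \<and> (\<forall>i<j. \<not> armijo \<phi> \<sigma> (xs k) d (\<beta> ^ i)) \<and>
         xs (Suc k) = xs k + (\<beta> ^ j) *\<^sub>R d"
    using assms(7) unfolding gdn_sequence_def by blast
  then obtain dd jj where dj: "\<And>k. - ?F (xs k) \<in> gen_hessian \<phi> (xs k) (dd k)"
    "\<And>k. armijo \<phi> \<sigma> (xs k) (dd k) (\<beta> ^ jj k)"
    "\<And>k i. i < jj k \<Longrightarrow> \<not> armijo \<phi> \<sigma> (xs k) (dd k) (\<beta> ^ i)"
    "\<And>k. xs (Suc k) = xs k + (\<beta> ^ jj k) *\<^sub>R dd k"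
    by metis
  define \<tau> where "\<tau> k = \<beta> ^ jj k" for k
  have tpos: "\<tau> k > 0" for k unfolding \<tau>_def using bt by simp
  have tle1: "\<tau> k \<le> 1" for k unfolding \<tau>_def using bt by (simp add: power_le_one)
  have arm: "\<phi> (xs (Suc k)) \<le> \<phi> (xs k) + \<sigma> * \<tau> k * (?F (xs k) \<bullet> dd k)" for k
    using dj(2)[of k] dj(4)[of k] unfolding armijo_def \<tau>_def by simp
  have desc: "?F (xs k) \<bullet> dd k \<le> 0" if "\<phi> (xs k) \<le> \<phi> x0" for k
  proof (cases "dd k = 0")
    case True then show ?thesis by simp
  next
    case False
    then have "(- ?F (xs k)) \<bullet> dd k > 0" using pd that dj(1)[of k] by blast
    then show ?thesis by simp
  qed
  have dec1: "\<phi> (xs (Suc k)) \<le> \<phi> (xs k)" if "\<phi> (xs k) \<le> \<phi> x0" for k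
  proof -
    have "\<sigma> * \<tau> k * (?F (xs k) \<bullet> dd k) \<le> 0"
      using desc[OF that] sg tpos[of k] by (simp add: mult_nonneg_nonpos)
    then show ?thesis using arm[of k] by linarith
  qed
  have inO: "\<phi> (xs k) \<le> \<phi> x0" for k
  proof (induction k)
    case 0 then show ?case using x0 by simp
  next
    case (Suc k) then show ?case using dec1[OF Suc] by linarith
  qed
  have decs: "\<phi> (xs (Suc k)) \<le> \<phi> (xs k)" for k using dec1[OF inO] .
  have phlim: "(\<lambda>k. \<phi> (xs k)) \<longlonglongrightarrow> \<phi> xb"
    using continuous_on_tendsto_compose[OF phi_cont[OF C] lim] by simp
  have anti: "antimono_on UNIV (\<lambda>k. \<phi> (xs k))"
    using decs by (intro decseq_SucI) (simp add: monotone_on_def)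
  have Dnn: "\<phi> xb \<le> \<phi> (xs k)" for k using decseq_ge[OF anti phlim] .
  have xbO: "\<phi> xb \<le> \<phi> x0"
    by (rule tendsto_le[OF _ tendsto_const phlim]) (use inO in auto)
  have pdb: "\<forall>u z. u \<noteq> 0 \<and> z \<in> gen_hessian \<phi> xb u \<longrightarrow> z \<bullet> u > 0" using pd xbO by blast
  obtain \<delta>0 L0 where d0: "\<delta>0 > 0" and Lip0: "\<forall>y\<in>ball xb \<delta>0. \<forall>z\<in>ball xb \<delta>0. norm (?F y - ?F z) \<le> L0 * norm (y - z)"
    using C unfolding C11_def by blast
  define L where "L = max L0 1"
  have Lpos: "L > 0" and L1: "L \<ge> 1" unfolding L_def by auto
  have Lip: "\<forall>y\<in>ball xb \<delta>0. \<forall>z\<in>ball xb \<delta>0. norm (?F y - ?F z) \<le> L * norm (y - z)"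
  proof (intro ballI)
    fix y z assume "y \<in> ball xb \<delta>0" "z \<in> ball xb \<delta>0"
    then have "norm (?F y - ?F z) \<le> L0 * norm (y - z)" using Lip0 by blast
    also have "\<dots> \<le> L * norm (y - z)" unfolding L_def by (simp add: mult_right_mono)
    finally show "norm (?F y - ?F z) \<le> L * norm (y - z)" .
  qed
  obtain \<delta>1 \<kappa> where d1: "0 < \<delta>1" "\<delta>1 \<le> \<delta>0" and kpos: "0 < \<kappa>"
    and reg1: "\<forall>q\<in>ball xb \<delta>1. \<forall>u w. (w, -u) \<in> regular_normal_cone (gphF ?F) (q, ?F q)
        \<longrightarrow> w \<bullet> u \<ge> \<kappa> * (norm u)\<^sup>2"
    using unif_pos[OF C Lip _ d0 pdb] Lpos by auto
  have sub01: "ball xb \<delta>1 \<subseteq> ball xb \<delta>0" using d1 by auto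
  have Lip1: "\<forall>y\<in>ball xb \<delta>1. \<forall>z\<in>ball xb \<delta>1. norm (?F y - ?F z) \<le> L * norm (y - z)"
    using Lip sub01 by blast
  have reg2: "\<forall>q\<in>ball xb \<delta>1. \<forall>u w. (w, -u) \<in> regular_normal_cone (gphF ?F) (q, ?F q)
        \<longrightarrow> w \<bullet> u \<ge> \<kappa> * (norm u)\<^sup>2 \<and> norm w \<le> L * norm u"
    using reg1 reg_bound[OF Lip] Lpos sub01 by (meson less_imp_le subsetD)
  define \<delta>2 where "\<delta>2 = \<delta>1 / 2"
  have d2: "\<delta>2 > 0" unfolding \<delta>2_def using d1 by simp
  have sub12: "ball xb \<delta>2 \<subseteq> ball xb \<delta>1" unfolding \<delta>2_def using d1 by auto
  have smono: "(y - x) \<bullet> (?F y - ?F x) \<ge> \<kappa> * (norm (y - x))\<^sup>2"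
    if "x \<in> ball xb \<delta>2" "y \<in> ball xb \<delta>2" for x y
    using strong_mono[OF Lip1 _ d1(1) reg1] that Lpos unfolding \<delta>2_def by simp
  have est: "z \<bullet> u \<ge> \<kappa> * (norm u)\<^sup>2 \<and> norm z \<le> L * norm u"
    if "x \<in> ball xb \<delta>1" "z \<in> gen_hessian \<phi> x u" for x z u
    using lim_est[OF reg2 that] .
  have ev1: "eventually (\<lambda>k. xs k \<in> ball xb (\<delta>2 / 2)) sequentially"
    using lim d2 open_ball unfolding tendsto_def by (metis centre_in_ball half_gt_zero)
  have dlim: "(\<lambda>k. xs (Suc k) - xs k) \<longlonglongrightarrow> 0"
    using tendsto_diff[OF LIMSEQ_Suc[OF lim] lim] by simp
  have ev2: "eventually (\<lambda>k. norm (xs (Suc k) - xs k) < \<beta> * \<delta>2 / 2) sequentially"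
  proof -
    have "\<beta> * \<delta>2 / 2 > 0" using bt d2 by simp
    then have "eventually (\<lambda>k. dist (xs (Suc k) - xs k) 0 < \<beta> * \<delta>2 / 2) sequentially"
      using tendsto_iff[THEN iffD1, OF dlim] by blast
    then show ?thesis by (simp add: dist_norm)
  qed
  obtain K where K: "\<And>k. k \<ge> K \<Longrightarrow> xs k \<in> ball xb (\<delta>2 / 2) \<and> norm (xs (Suc k) - xs k) < \<beta> * \<delta>2 / 2"
    using eventually_conj[OF ev1 ev2] unfolding eventually_sequentially by blast
  define \<tau>min where "\<tau>min = \<beta> * min 1 ((1 - \<sigma>) * \<kappa> / L)"
  have tmpos: "\<tau>min > 0" unfolding \<tau>min_def using bt sg kpos Lpos by simp
  define a0 where "a0 = \<sigma> * \<tau>min * \<kappa> / L\<^sup>2"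
  have a0pos: "a0 > 0" unfolding a0_def using sg tmpos kpos Lpos by simp
  have tail: "\<phi> (xs (Suc k)) \<le> \<phi> (xs k) - a0 * (norm (?F (xs k)))\<^sup>2
      \<and> \<phi> (xs k) - \<phi> xb \<le> (norm (?F (xs k)))\<^sup>2 / (2 * \<kappa>)
      \<and> norm (xs (Suc k) - xs k) \<le> norm (?F (xs k)) / \<kappa>" if k: "k \<ge> K" for k
  proof -
    let ?x = "xs k" and ?g = "?F (xs k)" and ?d = "dd k"
    have xin: "?x \<in> ball xb (\<delta>2 / 2)" and stepn: "norm (xs (Suc k) - ?x) < \<beta> * \<delta>2 / 2" using K[OF k] by auto
    have "?x \<in> ball xb \<delta>2" using xin d2 by auto
    then have xin1: "?x \<in> ball xb \<delta>1" using sub12 by blast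
    have E1: "(- ?g) \<bullet> ?d \<ge> \<kappa> * (norm ?d)\<^sup>2 \<and> norm (- ?g) \<le> L * norm ?d"
      using est[OF xin1 dj(1)[of k]] .
    have gd: "?g \<bullet> ?d \<le> - \<kappa> * (norm ?d)\<^sup>2" using E1 by simp
    have gL: "norm ?g \<le> L * norm ?d" using E1 by simp
    have dnz: "?d \<noteq> 0" using gL gnz[of k] by auto
    have dg: "norm ?d \<le> norm ?g / \<kappa>"
    proof -
      have "\<kappa> * (norm ?d)\<^sup>2 \<le> norm ?g * norm ?d"
        using E1 Cauchy_Schwarz_ineq2[of "- ?g" ?d] by (simp add: abs_le_iff)
      then have "(\<kappa> * norm ?d) * norm ?d \<le> norm ?g * norm ?d" by (simp add: power2_eq_square mult.assoc)
      then have "\<kappa> * norm ?d \<le> norm ?g" using dnz by simp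
      then show ?thesis using kpos by (simp add: le_divide_eq mult.commute)
    qed
    have step_eq: "xs (Suc k) - ?x = \<tau> k *\<^sub>R ?d" using dj(4)[of k] unfolding \<tau>_def by simp
    have tau_ge: "\<tau> k \<ge> \<tau>min"
    proof (cases "jj k = 0")
      case True
      then have "\<tau> k = 1" unfolding \<tau>_def by simp
      moreover have "\<tau>min \<le> \<beta>" unfolding \<tau>min_def using bt by (simp add: mult_left_le)
      ultimately show ?thesis using bt by simp
    next
      case False
      define t' where "t' = \<beta> ^ (jj k - 1)"
      have tt: "\<tau> k = \<beta> * t'" unfolding \<tau>_def t'_def using False by (metis power_eq_if)
      have t'pos: "t' > 0" unfolding t'_def using bt by simp
      have fail: "\<not> armijo \<phi> \<sigma> ?x ?d t'" unfolding t'_def using dj(3)[of "jj k - 1" k] False by simp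
      define v where "v = t' *\<^sub>R ?d"
      have nv: "norm v < \<delta>2 / 2"
      proof -
        have "norm (xs (Suc k) - ?x) = \<beta> * norm v" unfolding v_def using step_eq tt bt t'pos by simp
        then have "\<beta> * norm v < \<beta> * (\<delta>2 / 2)" using stepn by simp
        then show ?thesis using bt by simp
      qed
      have up: "\<phi> (?x + v) \<le> \<phi> ?x + ?g \<bullet> v + L / 2 * (norm v)\<^sup>2"
      proof (rule segment_ineq_le[OF C])
        fix s :: real assume s: "0 \<le> s" "s \<le> 1"
        have "norm (s *\<^sub>R v) \<le> norm v" using s by (simp add: mult_left_le_one_le)
        moreover have "dist xb (?x + s *\<^sub>R v) \<le> dist xb ?x + norm (s *\<^sub>R v)"
          using dist_triangle[of xb "?x + s *\<^sub>R v" ?x] by (simp add: dist_norm)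
        ultimately have "dist xb (?x + s *\<^sub>R v) < \<delta>2" using xin nv by simp
        then have pin': "?x + s *\<^sub>R v \<in> ball xb \<delta>1" using sub12 by auto
        have "norm (?F (?x + s *\<^sub>R v) - ?g) \<le> L * norm ((?x + s *\<^sub>R v) - ?x)"
          using Lip1 pin' xin1 by blast
        then have nF: "norm (?F (?x + s *\<^sub>R v) - ?g) \<le> L * norm (s *\<^sub>R v)" by simp
        have "(?F (?x + s *\<^sub>R v) - ?g) \<bullet> v \<le> norm (?F (?x + s *\<^sub>R v) - ?g) * norm v"
          by (rule norm_cauchy_schwarz)
        also have "\<dots> \<le> L * norm (s *\<^sub>R v) * norm v" using nF by (simp add: mult_right_mono)
        finally have "(?F (?x + s *\<^sub>R v) - ?g) \<bullet> v \<le> L * norm (s *\<^sub>R v) * norm v" .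
        then show "(?F (?x + s *\<^sub>R v) - ?g) \<bullet> v \<le> L * s * (norm v)\<^sup>2"
          using s by (simp add: power2_eq_square mult.assoc)
      qed
      have lowf: "\<phi> (?x + v) > \<phi> ?x + \<sigma> * t' * (?g \<bullet> ?d)" using fail unfolding armijo_def v_def by simp
      have gv: "?g \<bullet> v = t' * (?g \<bullet> ?d)" unfolding v_def by simp
      have nv2: "(norm v)\<^sup>2 = t'\<^sup>2 * (norm ?d)\<^sup>2" unfolding v_def using t'pos by (simp add: power_mult_distrib)
      have "\<sigma> * t' * (?g \<bullet> ?d) < t' * (?g \<bullet> ?d) + L / 2 * (t'\<^sup>2 * (norm ?d)\<^sup>2)"
      proof -
        have "L / 2 * (norm v)\<^sup>2 = L / 2 * (t'\<^sup>2 * (norm ?d)\<^sup>2)" using nv2 by simp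
        then show ?thesis using up lowf gv by linarith
      qed
      then have "(1 - \<sigma>) * (t' * (- (?g \<bullet> ?d))) < L / 2 * (t'\<^sup>2 * (norm ?d)\<^sup>2)"
        by (simp add: algebra_simps)
      moreover have "(1 - \<sigma>) * (t' * (\<kappa> * (norm ?d)\<^sup>2)) \<le> (1 - \<sigma>) * (t' * (- (?g \<bullet> ?d)))"
        using gd sg t'pos by (intro mult_left_mono) auto
      ultimately have ii: "(t' * (norm ?d)\<^sup>2) * ((1 - \<sigma>) * \<kappa>) < (t' * (norm ?d)\<^sup>2) * (L / 2 * t')"
        by (simp add: power2_eq_square algebra_simps)
      have pp: "t' * (norm ?d)\<^sup>2 > 0" using t'pos dnz by simp
      have "(1 - \<sigma>) * \<kappa> < L / 2 * t'" using mult_less_cancel_left_pos[OF pp] ii by blast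
      moreover have "L / 2 * t' = (L * t') / 2" by simp
      moreover have "0 \<le> (1 - \<sigma>) * \<kappa>" using sg kpos by simp
      ultimately have "(1 - \<sigma>) * \<kappa> < L * t'" by linarith
      then have "(1 - \<sigma>) * \<kappa> / L < t'" using Lpos by (simp add: divide_less_eq mult.commute)
      then have "min 1 ((1 - \<sigma>) * \<kappa> / L) \<le> t'" by linarith
      then show ?thesis unfolding \<tau>min_def using tt bt by simp
    qed
    have A: "\<phi> (xs (Suc k)) \<le> \<phi> ?x - \<sigma> * \<tau>min * \<kappa> * (norm ?d)\<^sup>2"
    proof -
      have "\<sigma> * \<tau> k * (?g \<bullet> ?d) \<le> \<sigma> * \<tau>min * (?g \<bullet> ?d)"
      proof -
        have "0 \<le> \<kappa> * (norm ?d)\<^sup>2" using kpos by simp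
        then have G0: "?g \<bullet> ?d \<le> 0" using gd by simp
        have "\<sigma> * \<tau>min \<le> \<sigma> * \<tau> k" by (rule mult_left_mono) (use tau_ge sg in auto)
        from mult_right_mono_neg[OF this G0] show ?thesis .
      qed
      moreover have "\<sigma> * \<tau>min * (?g \<bullet> ?d) \<le> \<sigma> * \<tau>min * (- \<kappa> * (norm ?d)\<^sup>2)"
        using gd sg tmpos by (intro mult_left_mono) auto
      ultimately show ?thesis using arm[of k] by (simp add: algebra_simps)
    qed
    have B: "(norm ?g)\<^sup>2 \<le> L\<^sup>2 * (norm ?d)\<^sup>2"
      using gL by (metis norm_ge_zero power_mono power_mult_distrib)
    have part1: "\<phi> (xs (Suc k)) \<le> \<phi> ?x - a0 * (norm ?g)\<^sup>2"
    proof -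
      have "a0 * (norm ?g)\<^sup>2 \<le> a0 * (L\<^sup>2 * (norm ?d)\<^sup>2)" using B a0pos by (simp add: mult_left_mono)
      also have "\<dots> = \<sigma> * \<tau>min * \<kappa> * (norm ?d)\<^sup>2" unfolding a0_def using Lpos by simp
      finally show ?thesis using A by linarith
    qed
    have part2: "\<phi> ?x - \<phi> xb \<le> (norm ?g)\<^sup>2 / (2 * \<kappa>)"
    proof -
      let ?v = "xb - ?x"
      have "\<phi> (?x + ?v) \<ge> \<phi> ?x + ?g \<bullet> ?v + \<kappa> / 2 * (norm ?v)\<^sup>2"
      proof (rule segment_ineq_ge[OF C])
        fix s :: real assume s: "0 \<le> s" "s \<le> 1"
        have pin: "?x + s *\<^sub>R ?v \<in> ball xb \<delta>2"
        proof -
          have "?x + s *\<^sub>R ?v = (1 - s) *\<^sub>R ?x + s *\<^sub>R xb" by (simp add: algebra_simps)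
          moreover have "xb \<in> ball xb (\<delta>2 / 2)" using d2 by simp
          ultimately have "?x + s *\<^sub>R ?v \<in> ball xb (\<delta>2 / 2)"
            using convexD[OF convex_ball xin, of xb "1 - s" s] s by simp
          then show ?thesis using d2 by auto
        qed
        have xin2: "?x \<in> ball xb \<delta>2" using xin d2 by auto
        have "(s *\<^sub>R ?v) \<bullet> (?F (?x + s *\<^sub>R ?v) - ?g) \<ge> \<kappa> * (norm (s *\<^sub>R ?v))\<^sup>2"
          using smono[OF xin2 pin] by simp
        moreover have "(s *\<^sub>R ?v) \<bullet> (?F (?x + s *\<^sub>R ?v) - ?g) = s * (?v \<bullet> (?F (?x + s *\<^sub>R ?v) - ?g))"
          by (rule inner_scaleR_left)
        moreover have "\<kappa> * (norm (s *\<^sub>R ?v))\<^sup>2 = s * (\<kappa> * s * (norm ?v)\<^sup>2)"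
          using s by (simp add: power_mult_distrib power2_eq_square)
        ultimately have "s * (?v \<bullet> (?F (?x + s *\<^sub>R ?v) - ?g)) \<ge> s * (\<kappa> * s * (norm ?v)\<^sup>2)"
          by linarith
        then have "s = 0 \<or> ?v \<bullet> (?F (?x + s *\<^sub>R ?v) - ?g) \<ge> \<kappa> * s * (norm ?v)\<^sup>2"
          using s by (metis mult_le_cancel_left_pos order_le_less)
        then show "(?F (?x + s *\<^sub>R ?v) - ?g) \<bullet> ?v \<ge> \<kappa> * s * (norm ?v)\<^sup>2"
          by (auto simp: inner_commute)
      qed
      then have "\<phi> xb \<ge> \<phi> ?x + ?g \<bullet> ?v + \<kappa> / 2 * (norm ?v)\<^sup>2" by simp
      moreover have "?g \<bullet> ?v \<ge> - (norm ?g * norm ?v)"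
        using Cauchy_Schwarz_ineq2[of ?g ?v] by (simp add: abs_le_iff)
      moreover have "- (norm ?g * norm ?v) + \<kappa> / 2 * (norm ?v)\<^sup>2 \<ge> - (norm ?g)\<^sup>2 / (2 * \<kappa>)"
      proof -
        have "0 \<le> (\<kappa> * norm ?v - norm ?g)\<^sup>2" by simp
        then have "0 \<le> 2 * \<kappa> * (- (norm ?g * norm ?v) + \<kappa> / 2 * (norm ?v)\<^sup>2) + (norm ?g)\<^sup>2"
          by (simp add: power2_eq_square algebra_simps)
        then have "(- (norm ?g)\<^sup>2) / (2 * \<kappa>) \<le> (2 * \<kappa> * (- (norm ?g * norm ?v) + \<kappa> / 2 * (norm ?v)\<^sup>2)) / (2 * \<kappa>)"
          using kpos by (intro divide_right_mono) auto
        then show ?thesis using kpos by simp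
      qed
      ultimately show ?thesis by simp
    qed
    have part3: "norm (xs (Suc k) - ?x) \<le> norm ?g / \<kappa>"
    proof -
      have "norm (xs (Suc k) - ?x) = \<tau> k * norm ?d" using step_eq tpos[of k] by simp
      also have "\<dots> \<le> norm ?d" using tle1[of k] tpos[of k] by (simp add: mult_left_le_one_le)
      finally show ?thesis using dg by linarith
    qed
    show ?thesis using part1 part2 part3 by blast
  qed
  define \<mu> where "\<mu> = max (1/2) (1 - 2 * \<kappa> * a0)"
  have mu: "0 < \<mu>" "\<mu> < 1" unfolding \<mu>_def using kpos a0pos by auto
  have Q: "\<phi> (xs (Suc k)) - \<phi> xb \<le> \<mu> * (\<phi> (xs k) - \<phi> xb)" if k: "k \<ge> K" for k
  proof -
    have t: "\<phi> (xs (Suc k)) \<le> \<phi> (xs k) - a0 * (norm (?F (xs k)))\<^sup>2"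
      "\<phi> (xs k) - \<phi> xb \<le> (norm (?F (xs k)))\<^sup>2 / (2 * \<kappa>)" using tail[OF k] by auto
    have "2 * \<kappa> * (\<phi> (xs k) - \<phi> xb) \<le> (norm (?F (xs k)))\<^sup>2"
      using t(2) kpos by (simp add: le_divide_eq mult.commute)
    then have "a0 * (2 * \<kappa> * (\<phi> (xs k) - \<phi> xb)) \<le> a0 * (norm (?F (xs k)))\<^sup>2"
      using a0pos by (simp add: mult_left_mono)
    then have "\<phi> (xs (Suc k)) - \<phi> xb \<le> (1 - 2 * \<kappa> * a0) * (\<phi> (xs k) - \<phi> xb)"
      using t(1) by (simp add: algebra_simps)
    moreover have "(1 - 2 * \<kappa> * a0) * (\<phi> (xs k) - \<phi> xb) \<le> \<mu> * (\<phi> (xs k) - \<phi> xb)"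
      unfolding \<mu>_def using Dnn[of k] by (intro mult_right_mono) auto
    ultimately show ?thesis by linarith
  qed
  have partI: "\<exists>\<mu> k0. 0 < \<mu> \<and> \<mu> < 1 \<and> (\<forall>k\<ge>k0. \<phi> (xs (Suc k)) - \<phi> xb \<le> \<mu> * (\<phi> (xs k) - \<phi> xb))"
    using mu Q by blast
  define A where "A = (\<phi> (xs K) - \<phi> xb) / \<mu> ^ K"
  have A0: "A \<ge> 0" unfolding A_def using Dnn[of K] mu by simp
  have Dk: "\<phi> (xs k) - \<phi> xb \<le> A * \<mu> ^ k" if k: "k \<ge> K" for k
  proof -
    have "\<phi> (xs (K + i)) - \<phi> xb \<le> \<mu> ^ i * (\<phi> (xs K) - \<phi> xb)" for i
    proof (induction i)
      case 0 then show ?case by simp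
    next
      case (Suc i)
      have "\<phi> (xs (Suc (K + i))) - \<phi> xb \<le> \<mu> * (\<phi> (xs (K + i)) - \<phi> xb)" using Q[of "K + i"] by simp
      also have "\<dots> \<le> \<mu> * (\<mu> ^ i * (\<phi> (xs K) - \<phi> xb))" using Suc mu by (simp add: mult_left_mono)
      finally show ?case by simp
    qed
    from this[of "k - K"] have "\<phi> (xs k) - \<phi> xb \<le> \<mu> ^ (k - K) * (\<phi> (xs K) - \<phi> xb)" using k by simp
    moreover have "\<mu> ^ (k - K) * (\<phi> (xs K) - \<phi> xb) = A * \<mu> ^ k"
    proof -
      have "\<mu> ^ k = \<mu> ^ (k - K) * \<mu> ^ K" using k by (metis le_add_diff_inverse2 power_add)
      then show ?thesis unfolding A_def using mu by simp
    qed
    ultimately show ?thesis by simp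
  qed
  define r where "r = sqrt \<mu>"
  have r: "0 < r" "r < 1" unfolding r_def using mu by auto
  have r2: "r ^ 2 = \<mu>" unfolding r_def using mu by simp
  define B where "B = sqrt (A / a0)"
  have B0: "B \<ge> 0" unfolding B_def using A0 a0pos by simp
  have gk: "norm (?F (xs k)) \<le> B * r ^ k" if k: "k \<ge> K" for k
  proof -
    have "a0 * (norm (?F (xs k)))\<^sup>2 \<le> \<phi> (xs k) - \<phi> (xs (Suc k))" using tail[OF k] by simp
    also have "\<dots> \<le> \<phi> (xs k) - \<phi> xb" using Dnn[of "Suc k"] by simp
    also have "\<dots> \<le> A * \<mu> ^ k" using Dk[OF k] .
    finally have "(norm (?F (xs k)))\<^sup>2 \<le> (A / a0) * \<mu> ^ k" using a0pos by (simp add: le_divide_eq mult.commute)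
    also have "\<dots> = (B * r ^ k)\<^sup>2"
    proof -
      have e1: "(r ^ k)\<^sup>2 = (r\<^sup>2) ^ k" by (simp add: power_mult[symmetric] mult.commute)
      have e2: "B\<^sup>2 = A / a0" unfolding B_def using A0 a0pos by simp
      have "(B * r ^ k)\<^sup>2 = B\<^sup>2 * (r ^ k)\<^sup>2" by (rule power_mult_distrib)
      also have "\<dots> = (A / a0) * \<mu> ^ k" using e1 e2 r2 by simp
      finally show ?thesis by simp
    qed
    finally have "(norm (?F (xs k)))\<^sup>2 \<le> (B * r ^ k)\<^sup>2" .
    then show ?thesis by (rule power2_le_imp_le) (use B0 r in simp)
  qed
  have xk: "norm (xs k - xb) \<le> B / \<kappa> * r ^ k / (1 - r)" if k: "k \<ge> K" for k
  proof -
    have part: "norm (xs (k + n) - xs k) \<le> B / \<kappa> * r ^ k * (1 - r ^ n) / (1 - r)" for n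
    proof (induction n)
      case 0 then show ?case by simp
    next
      case (Suc n)
      have "norm (xs (Suc (k + n)) - xs (k + n)) \<le> norm (?F (xs (k + n))) / \<kappa>" using tail[of "k + n"] k by simp
      also have "\<dots> \<le> B * r ^ (k + n) / \<kappa>" using gk[of "k + n"] k kpos by (simp add: divide_right_mono)
      finally have st: "norm (xs (Suc (k + n)) - xs (k + n)) \<le> B * r ^ (k + n) / \<kappa>" .
      have "norm (xs (k + Suc n) - xs k) \<le> norm (xs (Suc (k + n)) - xs (k + n)) + norm (xs (k + n) - xs k)"
        using norm_triangle_ineq[of "xs (Suc (k + n)) - xs (k + n)" "xs (k + n) - xs k"] by simp
      also have "\<dots> \<le> B * r ^ (k + n) / \<kappa> + B / \<kappa> * r ^ k * (1 - r ^ n) / (1 - r)" using st Suc by simp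
      also have "\<dots> = B / \<kappa> * r ^ k * (1 - r ^ Suc n) / (1 - r)"
      proof -
        obtain C where C: "C = B / \<kappa> * r ^ k" by blast
        have r1: "1 - r \<noteq> 0" using r by simp
        have a: "B * r ^ (k + n) / \<kappa> = C * r ^ n" by (simp add: C power_add)
        have b: "B / \<kappa> * r ^ k * (1 - r ^ n) / (1 - r) = C * (1 - r ^ n) / (1 - r)" by (simp add: C)
        have c: "B / \<kappa> * r ^ k * (1 - r ^ Suc n) / (1 - r) = C * (1 - r ^ Suc n) / (1 - r)" by (simp add: C)
        have "C * r ^ n + C * (1 - r ^ n) / (1 - r) = C * (r ^ n * (1 - r)) / (1 - r) + C * (1 - r ^ n) / (1 - r)"
          using r1 by simp
        also have "\<dots> = (C * (r ^ n * (1 - r)) + C * (1 - r ^ n)) / (1 - r)" by (simp add: add_divide_distrib)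
        also have "C * (r ^ n * (1 - r)) + C * (1 - r ^ n) = C * (1 - r ^ Suc n)" by (simp add: algebra_simps)
        finally have d: "C * r ^ n + C * (1 - r ^ n) / (1 - r) = C * (1 - r ^ Suc n) / (1 - r)" .
        show ?thesis using a b c d by linarith
      qed
      finally show ?case .
    qed
    have bnd: "norm (xs m - xs k) \<le> B / \<kappa> * r ^ k / (1 - r)" if m: "m \<ge> k" for m
    proof -
      have "norm (xs m - xs k) \<le> B / \<kappa> * r ^ k * (1 - r ^ (m - k)) / (1 - r)" using part[of "m - k"] m by simp
      also have "\<dots> \<le> B / \<kappa> * r ^ k * 1 / (1 - r)"
        using r B0 kpos by (intro divide_right_mono mult_left_mono) auto
      finally show ?thesis by simp
    qed
    have nl: "(\<lambda>m. norm (xs m - xs k)) \<longlonglongrightarrow> norm (xb - xs k)" by (intro tendsto_intros lim)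
    have "norm (xb - xs k) \<le> B / \<kappa> * r ^ k / (1 - r)"
      by (rule tendsto_le[OF _ tendsto_const nl]) (use bnd in \<open>auto simp: eventually_sequentially\<close>)
    then show ?thesis by (simp add: norm_minus_commute)
  qed
  define c where "c = max 1 (max B (B / \<kappa> / (1 - r)))"
  have cpos: "c > 0" unfolding c_def by simp
  have partII: "\<forall>k\<ge>K. norm (xs k - xb) \<le> c * r ^ k \<and> norm (?F (xs k)) \<le> c * r ^ k"
  proof (intro allI impI conjI)
    fix k assume k: "K \<le> k"
    have rk: "r ^ k \<ge> 0" using r by simp
    have "B / \<kappa> * r ^ k / (1 - r) = (B / \<kappa> / (1 - r)) * r ^ k" by simp
    also have "\<dots> \<le> c * r ^ k" unfolding c_def using rk by (intro mult_right_mono) auto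
    finally show "norm (xs k - xb) \<le> c * r ^ k" using xk[OF k] by linarith
    have "B * r ^ k \<le> c * r ^ k" unfolding c_def using rk by (intro mult_right_mono) auto
    then show "norm (?F (xs k)) \<le> c * r ^ k" using gk[OF k] by linarith
  qed
  show ?thesis using partI partII cpos r by blast
qed

end
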